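(* The relations $\equiv_{\mathrm{lps}}$ and $\equiv_{\mathrm{rps}}$ are congruences on the free monoid $\mathcal{A}^*$.
   Context: Let $\mathcal{A}=\{1<2<3<\cdots\}$ be the positive integers viewed as a totally ordered alphabet. An lPS tableau is a finite (possibly empty) sequence of nonempty bottom-justified columns of boxes filled with elements of $\mathcal{A}$, such that the entries of each column are strictly decreasing from top to bottom and the bottom entries of the columns form a weakly increasing sequence from left to right. An rPS tableau is defined in the same way but with columns weakly decreasing from top to bottom and the bottom row strictly increasing from left to right. Right insertion of a symbol $a$ into an lPS tableau $B$: if $a$ is greater than or equal to every entry of the bottom row, append a new column consisting of $a$ at the right end; otherwise, let $z$ be the leftmost bottom-row entry with $z>a$ and put $a$ in a new box at the bottom of the column of $z$ (the previous entries of that column move up one box). Right insertion into an rPS tableau is the same except that a new column is created iff $a$ is strictly greater than every bottom-row entry, and otherwise $z$ is the leftmost bottom-row entry with $z\geq a$. For a word $w=w_1\cdots w_k$, $\mathfrak{R}_\ell(w)$ (resp. $\mathfrak{R}_r(w)$) is obtained by starting with the empty lPS (resp. rPS) tableau and right-inserting $w_1,\dots,w_k$ in order. Define $u\equiv_{\mathrm{lps}}v\iff\mathfrak{R}_\ell(u)=\mathfrak{R}_\ell(v)$ and $u\equiv_{\mathrm{rps}}v\iff\mathfrak{R}_r(u)=\mathfrak{R}_r(v)$ for $u,v\in\mathcal{A}^*$. *)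

theory Defs
  imports Main
begin

text \<open>The alphabet A = positive integers, represented by nat with entries > 0.
  A word is a list. A PS tableau is a list of columns (left to right);
  each column is a nonempty list of entries read from top to bottom,
  so the bottom entry of a column is its last element.\<close>

type_synonym word = "nat list"
type_synonym column = "nat list"
type_synonym tableau = "column list"

definition word_over_A :: "word \<Rightarrow> bool" where
  "word_over_A w \<longleftrightarrow> (\<forall>x\<in>set w. 0 < x)"

definition bottom_row :: "tableau \<Rightarrow> nat list" where
  "bottom_row T = map last T"

fun lps_insert :: "tableau \<Rightarrow> nat \<Rightarrow> tableau" where
  "lps_insert [] a = [[a]]"
| "lps_insert (c # T) a =
     (if a < last c then (c @ [a]) # T else c # lps_insert T a)"

fun rps_insert :: "tableau \<Rightarrow> nat \<Rightarrow> tableau" where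
  "rps_insert [] a = [[a]]"
| "rps_insert (c # T) a =
     (if a \<le> last c then (c @ [a]) # T else c # rps_insert T a)"

definition R_l :: "word \<Rightarrow> tableau" where
  "R_l w = foldl lps_insert [] w"

definition R_r :: "word \<Rightarrow> tableau" where
  "R_r w = foldl rps_insert [] w"

definition lps_equiv :: "word \<Rightarrow> word \<Rightarrow> bool" where
  "lps_equiv u v \<longleftrightarrow> R_l u = R_l v"

definition rps_equiv :: "word \<Rightarrow> word \<Rightarrow> bool" where
  "rps_equiv u v \<longleftrightarrow> R_r u = R_r v"

definition is_congruence :: "(word \<Rightarrow> word \<Rightarrow> bool) \<Rightarrow> bool" where
  "is_congruence E \<longleftrightarrow>
     (\<forall>u. word_over_A u \<longrightarrow> E u u) \<and>
     (\<forall>u v. word_over_A u \<longrightarrow> word_over_A v \<longrightarrow> E u v \<longrightarrow> E v u) \<and>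
     (\<forall>u v w. word_over_A u \<longrightarrow> word_over_A v \<longrightarrow> word_over_A w \<longrightarrow>
         E u v \<longrightarrow> E v w \<longrightarrow> E u w) \<and>
     (\<forall>u v x y. word_over_A u \<longrightarrow> word_over_A v \<longrightarrow> word_over_A x \<longrightarrow> word_over_A y \<longrightarrow>
         E u v \<longrightarrow> E (x @ u @ y) (x @ v @ y))"

end

theory Submission
  imports Defs
begin

fun gins :: "(nat \<Rightarrow> nat \<Rightarrow> bool) \<Rightarrow> tableau \<Rightarrow> nat \<Rightarrow> tableau" where
  "gins P [] a = [[a]]"
| "gins P (c # T) a = (if P a (last c) then (c @ [a]) # T else c # gins P T a)"

lemma lps_gins: "lps_insert T a = gins (\<lambda>x z. x < z) T a"
  by (induction T) auto

lemma rps_gins: "rps_insert T a = gins (\<lambda>x z. x \<le> z) T a"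
  by (induction T) auto

fun gvalid :: "(nat \<Rightarrow> nat \<Rightarrow> bool) \<Rightarrow> tableau \<Rightarrow> bool" where
  "gvalid P [] = True"
| "gvalid P (c # S) = (c \<noteq> [] \<and> (\<forall>y\<in>set (concat S). \<not> P y (last c)) \<and> gvalid P S)"

fun acc :: "(nat \<Rightarrow> nat \<Rightarrow> bool) \<Rightarrow> tableau \<Rightarrow> nat \<Rightarrow> nat list \<Rightarrow> bool" where
  "acc P [] a ys = False"
| "acc P (c # V) a ys = ((\<forall>y\<in>set ys. \<not> P y (last c)) \<and> (P a (last c) \<or> acc P V a ys))"

locale goodP =
  fixes P :: "nat \<Rightarrow> nat \<Rightarrow> bool"
  assumes t1: "P a b \<Longrightarrow> \<not> P y b \<Longrightarrow> \<not> P y a"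
    and t2: "\<not> P b z \<Longrightarrow> \<not> P y b \<Longrightarrow> \<not> P y z"
begin

lemma set_gins: "set (concat (gins P S a)) = insert a (set (concat S))"
  by (induction S) auto

lemma valid_gins: "gvalid P S \<Longrightarrow> gvalid P (gins P S a)"
proof (induction S)
  case Nil
  then show ?case by simp
next
  case (Cons c S)
  show ?case
  proof (cases "P a (last c)")
    case True
    have "\<forall>y\<in>set (concat S). \<not> P y a"
    proof
      fix y assume "y \<in> set (concat S)"
      then have "\<not> P y (last c)" using Cons.prems by (simp del: set_concat)
      then show "\<not> P y a" using t1[OF True] by blast
    qed
    then show ?thesis using Cons.prems True by simp
  next
    case False
    have "\<forall>y\<in>set (concat (gins P S a)). \<not> P y (last c)"
      unfolding set_gins using False Cons.prems by simp
    then show ?thesis using Cons False by (simp del: set_concat)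
  qed
qed

lemma accA: "acc P V a (y # ys) \<Longrightarrow>
   gins P (gins P V a) y = gins P (gins P V y) a \<and> acc P (gins P V y) a ys"
proof (induction V)
  case Nil
  then show ?case by simp
next
  case (Cons c V)
  show ?case
  proof (cases "P a (last c)")
    case True
    with Cons.prems have "\<not> P y (last c)" by simp
    with True have "\<not> P y a" using t1 by blast
    with True Cons.prems \<open>\<not> P y (last c)\<close> show ?thesis by auto
  next
    case False
    with Cons.prems have "\<not> P y (last c)" "acc P V a (y # ys)" by auto
    with Cons.IH False Cons.prems show ?thesis by auto
  qed
qed

lemma accF: "acc P V a ys \<Longrightarrow>
   foldl (gins P) (gins P V a) ys = gins P (foldl (gins P) V ys) a"
proof (induction ys arbitrary: V)
  case Nil
  then show ?case by simp
next
  case (Cons y ys)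
  from accA[OF Cons.prems] Cons.IH show ?case by simp
qed

lemma accB: "P a b \<Longrightarrow> \<forall>y\<in>set ys. \<not> P y b \<Longrightarrow> acc P (gins P U b) a ys"
proof (induction U)
  case Nil
  then show ?case by simp
next
  case (Cons c U)
  have ys: "\<forall>y\<in>set ys. \<not> P y (last c)" if "\<not> P b (last c)"
    using Cons.prems(2) t2[OF that] by blast
  show ?case
  proof (cases "P b (last c)")
    case True
    then show ?thesis using Cons.prems by simp
  next
    case False
    then show ?thesis using Cons ys[OF False] by simp
  qed
qed

lemma comm: "P a b \<Longrightarrow> \<forall>y\<in>set ys. \<not> P y b \<Longrightarrow>
  foldl (gins P) (gins P (gins P U b) a) ys = gins P (foldl (gins P) (gins P U b) ys) a"
  using accF accB by blast

lemma key: "gvalid P S \<Longrightarrow>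
  foldl (gins P) T (concat (gins P S a)) = gins P (foldl (gins P) T (concat S)) a"
proof (induction S arbitrary: T)
  case Nil
  then show ?case by simp
next
  case (Cons c S)
  show ?case
  proof (cases "P a (last c)")
    case True
    from Cons.prems have ne: "c \<noteq> []" and ys: "\<forall>y\<in>set (concat S). \<not> P y (last c)" by auto
    obtain c' where c: "c = c' @ [last c]" using ne by (metis append_butlast_last_id)
    let ?U = "foldl (gins P) T c'"
    have "foldl (gins P) T (concat (gins P (c # S) a))
        = foldl (gins P) (gins P (gins P ?U (last c)) a) (concat S)"
      using True by (subst c) simp
    also have "\<dots> = gins P (foldl (gins P) (gins P ?U (last c)) (concat S)) a"
      using comm[OF True ys] .
    also have "\<dots> = gins P (foldl (gins P) T (concat (c # S))) a"
      by (subst (2) c) simp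
    finally show ?thesis .
  next
    case False
    with Cons show ?thesis by simp
  qed
qed

lemma valid_R: "gvalid P (foldl (gins P) [] u)"
  by (induction u rule: rev_induct) (auto intro: valid_gins)

lemma read_R: "foldl (gins P) T u = foldl (gins P) T (concat (foldl (gins P) [] u))"
proof (induction u rule: rev_induct)
  case Nil
  then show ?case by simp
next
  case (snoc a u)
  have "foldl (gins P) T (u @ [a]) = gins P (foldl (gins P) T u) a" by simp
  also have "\<dots> = gins P (foldl (gins P) T (concat (foldl (gins P) [] u))) a"
    using snoc.IH by (rule arg_cong)
  also have "\<dots> = foldl (gins P) T (concat (gins P (foldl (gins P) [] u) a))"
    using key[OF valid_R] by (rule sym)
  also have "\<dots> = foldl (gins P) T (concat (foldl (gins P) [] (u @ [a])))" by simp
  finally show ?case .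
qed

lemma cong: "foldl (gins P) [] u = foldl (gins P) [] v \<Longrightarrow>
  foldl (gins P) [] (x @ u @ y) = foldl (gins P) [] (x @ v @ y)"
proof -
  assume h: "foldl (gins P) [] u = foldl (gins P) [] v"
  have "foldl (gins P) (foldl (gins P) [] x) u = foldl (gins P) (foldl (gins P) [] x) v"
    using read_R[of "foldl (gins P) [] x" u] read_R[of "foldl (gins P) [] x" v] h by metis
  then show ?thesis by simp
qed

end

interpretation L: goodP "\<lambda>x z. (x::nat) < z" by unfold_locales auto
interpretation Rr: goodP "\<lambda>x z. (x::nat) \<le> z" by unfold_locales auto

lemma Rl_eq: "R_l w = foldl (gins (\<lambda>x z. x < z)) [] w"
proof -
  have "lps_insert = gins (\<lambda>x z. x < z)" by (intro ext) (rule lps_gins)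
  then show ?thesis by (simp add: R_l_def)
qed

lemma Rr_eq: "R_r w = foldl (gins (\<lambda>x z. x \<le> z)) [] w"
proof -
  have "rps_insert = gins (\<lambda>x z. x \<le> z)" by (intro ext) (rule rps_gins)
  then show ?thesis by (simp add: R_r_def)
qed

theorem proposition3p21:
  shows "is_congruence lps_equiv \<and> is_congruence rps_equiv"
  unfolding is_congruence_def lps_equiv_def rps_equiv_def Rl_eq Rr_eq
  by (intro conjI allI impI; (rule L.cong | rule Rr.cong | simp)?; simp)

end
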